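(* For any finite point set $P\subset\mathbb{R}^1$ containing the source $s$ and any $1/2<\delta<1$, $$\mathrm{cost}_2(\rho_{\mathrm{sb}}(P))\le c_\delta\cdot\mathrm{OPT},\qquad c_\delta:=\max\Big(1+\delta+\frac{(1+5\delta)(1-\delta)^2}{\delta^2},\ \frac1{\delta^2}+\frac12\Big),$$ where $\mathrm{OPT}=\mathrm{cost}_2(\rho_{\mathrm{opt}}(P))$ is the cost of an optimal range assignment on $P$.
   Context: A range assignment $\rho$ on $P$ induces a directed graph with edge $(p,q)$ iff $|pq|\le\rho(p)$; it is feasible if the graph contains an arborescence rooted at $s$ spanning $P$; $\mathrm{cost}_2(\rho(P))=\sum_{p\in P}\rho(p)^2$; an optimal assignment is a feasible one of minimum cost. Points of $P$ left of $s$ are $\ell_1,\ell_2,\dots$ and right of $s$ are $r_1,r_2,\dots$, numbered by increasing distance from $s$. The successor $\mathrm{suc}(p)$ of $r_i$ is $r_{i+1}$ and of $\ell_i$ is $\ell_{i+1}$; $s$ has successors $r_1,\ell_1$; extreme (farthest) points have none ($\mathrm{nil}$). The standard range $\rho_{\mathrm{st}}(p)$ of $p\ne s$ is $|p\,\mathrm{suc}(p)|$, or $0$ if extreme. A point $p\ne s$ is expensive if $\mathrm{suc}(p)\ne\mathrm{nil}$ and $|p\,\mathrm{suc}(p)|>\delta|s\,\mathrm{suc}(p)|$, cheap otherwise; $s$ is always expensive. $d_{\max}=\max\{|s\,\mathrm{suc}(p)|:p\text{ expensive}\}$ (for $p=s$ both successors considered). The source-based assignment: $\rho_{\mathrm{sb}}(s)=d_{\max}$,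 $\rho_{\mathrm{sb}}(p)=0$ for expensive $p\ne s$, $\rho_{\mathrm{sb}}(p)=\rho_{\mathrm{st}}(p)$ for cheap $p$. *)

theory Defs
  imports Complex_Main
begin

definition edges :: "real set \<Rightarrow> (real \<Rightarrow> real) \<Rightarrow> (real \<times> real) set" where
  "edges P \<rho> = {(p, q). p \<in> P \<and> q \<in> P \<and> \<bar>p - q\<bar> \<le> \<rho> p}"

(* the induced graph contains an arborescence rooted at s spanning P,
   i.e. every point of P is reachable from s *)
definition feasible :: "real set \<Rightarrow> real \<Rightarrow> (real \<Rightarrow> real) \<Rightarrow> bool" where
  "feasible P s \<rho> \<longleftrightarrow> (\<forall>p\<in>P. \<rho> p \<ge> 0) \<and> (\<forall>q\<in>P. (s, q) \<in> (edges P \<rho>)\<^sup>*)"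

definition cost2 :: "real set \<Rightarrow> (real \<Rightarrow> real) \<Rightarrow> real" where
  "cost2 P \<rho> = (\<Sum>p\<in>P. (\<rho> p)\<^sup>2)"

definition OPT :: "real set \<Rightarrow> real \<Rightarrow> real" where
  "OPT P s = Inf {cost2 P \<rho> | \<rho>. feasible P s \<rho>}"

definition suc :: "real set \<Rightarrow> real \<Rightarrow> real \<Rightarrow> real option" where
  "suc P s p =
     (if p > s then (if \<exists>q\<in>P. q > p then Some (Min {q\<in>P. q > p}) else None)
      else if p < s then (if \<exists>q\<in>P. q < p then Some (Max {q\<in>P. q < p}) else None)
      else None)"

definition succs_src :: "real set \<Rightarrow> real \<Rightarrow> real set" where
  "succs_src P s =
     (if \<exists>q\<in>P. q > s then {Min {q\<in>P. q > s}} else {}) \<union>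
     (if \<exists>q\<in>P. q < s then {Max {q\<in>P. q < s}} else {})"

definition rho_st :: "real set \<Rightarrow> real \<Rightarrow> real \<Rightarrow> real" where
  "rho_st P s p = (case suc P s p of None \<Rightarrow> 0 | Some q \<Rightarrow> \<bar>p - q\<bar>)"

definition expensive :: "real set \<Rightarrow> real \<Rightarrow> real \<Rightarrow> real \<Rightarrow> bool" where
  "expensive P s \<delta> p \<longleftrightarrow> p = s \<or>
     (\<exists>q. suc P s p = Some q \<and> \<bar>p - q\<bar> > \<delta> * \<bar>s - q\<bar>)"

(* d_max; the 0 only matters in the degenerate case P = {s} where no successor exists *)
definition d_max :: "real set \<Rightarrow> real \<Rightarrow> real \<Rightarrow> real" where
  "d_max P s \<delta> = Max (insert 0
     ({\<bar>s - q\<bar> | q. q \<in> succs_src P s} \<union>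
      {\<bar>s - q\<bar> | p q. p \<in> P \<and> p \<noteq> s \<and> expensive P s \<delta> p \<and> suc P s p = Some q}))"

definition rho_sb :: "real set \<Rightarrow> real \<Rightarrow> real \<Rightarrow> real \<Rightarrow> real" where
  "rho_sb P s \<delta> p =
     (if p = s then d_max P s \<delta>
      else if expensive P s \<delta> p then 0
      else rho_st P s p)"

definition c_delta :: "real \<Rightarrow> real" where
  "c_delta \<delta> = max (1 + \<delta> + (1 + 5 * \<delta>) * (1 - \<delta>)\<^sup>2 / \<delta>\<^sup>2) (1 / \<delta>\<^sup>2 + 1 / 2)"

end

theory Submission imports Defs begin

lemma intervals_len:
  fixes u v :: "'a \<Rightarrow> real"
  assumes "finite S" "S \<noteq> {}" "\<forall>p\<in>S. lo \<le> u p \<and> u p < v p \<and> v p \<le> hi"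
    "\<forall>p\<in>S. \<forall>p'\<in>S. p \<noteq> p' \<longrightarrow> v p \<le> u p' \<or> v p' \<le> u p"
  shows "(\<Sum>p\<in>S. v p - u p) \<le> hi - lo"
  using assms
proof (induction "card S" arbitrary: S hi rule: less_induct)
  case less
  have "Max (u ` S) \<in> u ` S" using less.prems(1,2) by (intro Max_in) auto
  then obtain p0 where p0: "p0 \<in> S" "u p0 = Max (u ` S)" by auto
  have mx: "u p \<le> u p0" if "p \<in> S" for p unfolding p0(2) using less.prems(1) that by (intro Max_ge) auto
  have vle: "v p \<le> u p0" if "p \<in> S - {p0}" for p
  proof -
    have "p \<in> S" "p \<noteq> p0" using that by auto
    then have "v p \<le> u p0 \<or> v p0 \<le> u p" using less.prems(4) p0(1) by blast
    moreover have "u p \<le> u p0" using mx that by auto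
    moreover have "u p0 < v p0" using less.prems(3) p0(1) by blast
    ultimately show ?thesis by linarith
  qed
  have split: "(\<Sum>p\<in>S. v p - u p) = (v p0 - u p0) + (\<Sum>p\<in>S - {p0}. v p - u p)"
    using less.prems(1) p0(1) by (simp add: sum.remove)
  have b0: "lo \<le> u p0" "v p0 \<le> hi" using less.prems(3) p0(1) by blast+
  show ?case
  proof (cases "S - {p0} = {}")
    case True
    have "(\<Sum>p\<in>S - {p0}. v p - u p) = 0" by (simp only: True sum.empty)
    then show ?thesis using split b0 by linarith
  next
    case False
    have h1: "card (S - {p0}) < card S" by (rule card_Diff1_less[OF less.prems(1) p0(1)])
    have h2: "\<forall>p\<in>S - {p0}. lo \<le> u p \<and> u p < v p \<and> v p \<le> u p0"
    proof
      fix p assume hp: "p \<in> S - {p0}"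
      then have "lo \<le> u p \<and> u p < v p" using less.prems(3) by blast
      then show "lo \<le> u p \<and> u p < v p \<and> v p \<le> u p0" using vle[OF hp] by blast
    qed
    have h3: "\<forall>p\<in>S - {p0}. \<forall>p'\<in>S - {p0}. p \<noteq> p' \<longrightarrow> v p \<le> u p' \<or> v p' \<le> u p"
      using less.prems(4) by blast
    have h4: "finite (S - {p0})" using less.prems(1) by simp
    have "(\<Sum>p\<in>S - {p0}. v p - u p) \<le> u p0 - lo"
      by (rule less.hyps[OF h1 h4 False h2 h3])
    then show ?thesis using split b0 by linarith
  qed
qed

lemma intervals_sq:
  fixes u v :: "'a \<Rightarrow> real"
  assumes "finite S" "\<forall>p\<in>S. lo \<le> u p \<and> u p < v p \<and> v p \<le> hi"
    "\<forall>p\<in>S. \<forall>p'\<in>S. p \<noteq> p' \<longrightarrow> v p \<le> u p' \<or> v p' \<le> u p"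
    "\<forall>p\<in>S. v p - u p \<le> M" "0 \<le> M"
  shows "(\<Sum>p\<in>S. (v p - u p)^2) \<le> M * max 0 (hi - lo)"
proof (cases "S = {}")
  case True then show ?thesis using assms by simp
next
  case False
  have "(\<Sum>p\<in>S. (v p - u p)^2) \<le> (\<Sum>p\<in>S. M * (v p - u p))"
  proof (rule sum_mono)
    fix p assume "p \<in> S"
    then have "0 \<le> v p - u p" "v p - u p \<le> M" using assms by auto
    then show "(v p - u p)^2 \<le> M * (v p - u p)"
      by (simp add: power2_eq_square mult_right_mono)
  qed
  also have "\<dots> = M * (\<Sum>p\<in>S. v p - u p)" by (simp add: sum_distrib_left)
  also have "\<dots> \<le> M * (hi - lo)"
    using intervals_len[OF assms(1) False assms(2,3)] assms(5) by (simp add: mult_left_mono)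
  also have "\<dots> \<le> M * max 0 (hi - lo)" using assms(5) by (simp add: mult_left_mono)
  finally show ?thesis .
qed

lemma c_ge1: assumes "1/2 < \<delta>" "\<delta> < 1"
  shows "1 + \<delta> + \<delta>*(1-\<delta>)^2 \<le> c_delta \<delta>"
proof -
  have d0: "0 < \<delta>" using assms by simp
  have "\<delta>^3 \<le> 1" using assms d0 by (simp add: power_le_one)
  then have h: "\<delta>^3 \<le> 1 + 5*\<delta>" using d0 by linarith
  have "\<delta>*(1-\<delta>)^2 * \<delta>^2 = \<delta>^3 * (1-\<delta>)^2" by (simp add: power2_eq_square power3_eq_cube)
  also have "\<dots> \<le> (1 + 5*\<delta>) * (1-\<delta>)^2" using h by (rule mult_right_mono[OF _ zero_le_power2])
  finally have "\<delta>*(1-\<delta>)^2 \<le> (1 + 5 * \<delta>) * (1 - \<delta>)\<^sup>2 / \<delta>\<^sup>2"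
    using d0 by (subst pos_le_divide_eq) auto
  then show ?thesis unfolding c_delta_def by linarith
qed

lemma c1_le: "1 + \<delta> + (1 + 5 * \<delta>) * (1 - \<delta>)\<^sup>2 / \<delta>\<^sup>2 \<le> c_delta \<delta>"
  unfolding c_delta_def by simp

lemma corner: assumes "1/2 < \<delta>" "\<delta> < 1"
  shows "1 + \<delta>*(1-\<delta>)^2 + \<delta>*(2*\<delta>-1)^2 \<le> c_delta \<delta> * \<delta>^2"
proof -
  have d0: "0 < \<delta>" using assms by simp
  have e: "(1 + \<delta> + (1 + 5 * \<delta>) * (1 - \<delta>)\<^sup>2 / \<delta>\<^sup>2) * \<delta>^2 = (1+\<delta>)*\<delta>^2 + (1 + 5 * \<delta>) * (1 - \<delta>)\<^sup>2"
    using d0 by (simp add: field_simps)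
  have "1 + \<delta>*(1-\<delta>)^2 + \<delta>*(2*\<delta>-1)^2 + \<delta>*(1-\<delta>)^2 = (1+\<delta>)*\<delta>^2 + (1 + 5 * \<delta>) * (1 - \<delta>)\<^sup>2"
    by (simp add: power2_eq_square algebra_simps)
  moreover have "0 \<le> \<delta>*(1-\<delta>)^2" using d0 by simp
  moreover have "(1 + \<delta> + (1 + 5 * \<delta>) * (1 - \<delta>)\<^sup>2 / \<delta>\<^sup>2) * \<delta>^2 \<le> c_delta \<delta> * \<delta>^2"
    using c1_le by (rule mult_right_mono) simp
  ultimately show ?thesis using e by linarith
qed

lemma Am: assumes "1 \<le> (A::real)" "0 \<le> D" "D \<le> m"
  shows "A * D^2 + (m - D)^2 \<le> A * m^2"
proof -
  have "A * m^2 - A * D^2 - (m - D)^2 = (m - D) * (A * (m + D) - (m - D))"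
    by (simp add: power2_eq_square algebra_simps)
  moreover have "0 \<le> A * (m + D) - (m - D)"
  proof -
    have "1 * (m + D) \<le> A * (m + D)" using assms by (intro mult_right_mono) auto
    then have "m + D \<le> A * (m + D)" by simp
    then show ?thesis using assms by linarith
  qed
  moreover have "0 \<le> m - D" using assms by simp
  ultimately show ?thesis by (metis diff_ge_0_iff_ge diff_diff_eq mult_nonneg_nonneg)
qed

lemma R1: assumes "1/2 < \<delta>" "\<delta> < 1" "0 \<le> x" "\<delta>*x \<le> (1-\<delta>)*\<rho>" "0 \<le> \<rho>"
  shows "(1 + \<delta>*(1-\<delta>)^2)*(x+\<rho>)^2 + \<delta>*(\<rho>-x)^2 \<le> c_delta \<delta> * \<rho>^2"
proof -
  define A where "A = 1 + \<delta>*(1-\<delta>)^2"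
  define K where "K = (A+\<delta>)*(1-\<delta>) + 2*(A-\<delta>)*\<delta>"
  have d0: "0 < \<delta>" using assms by simp
  have A1: "1 \<le> A" unfolding A_def using d0 by simp
  have K0: "0 \<le> K" unfolding K_def using A1 assms by (intro add_nonneg_nonneg mult_nonneg_nonneg) auto
  have g: "\<delta>^2 * (A*(x+\<rho>)^2 + \<delta>*(\<rho>-x)^2) = (A+\<delta>)*\<delta>*(\<delta>*x*x) + 2*(A-\<delta>)*\<delta>^2*x*\<rho> + (A+\<delta>)*\<delta>^2*\<rho>^2"
    by (simp add: power2_eq_square algebra_simps)
  have s1: "\<delta>*x*x \<le> (1-\<delta>)*\<rho>*x" using assms(3,4) by (rule mult_right_mono[rotated])
  have s2: "(A+\<delta>)*\<delta>*(\<delta>*x*x) \<le> (A+\<delta>)*\<delta>*((1-\<delta>)*\<rho>*x)"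
    using s1 A1 d0 by (intro mult_left_mono) auto
  have s3: "(A+\<delta>)*\<delta>*((1-\<delta>)*\<rho>*x) + 2*(A-\<delta>)*\<delta>^2*x*\<rho> = (\<delta>*x)*(\<rho>*K)"
    unfolding K_def by (simp add: power2_eq_square algebra_simps)
  have s4: "(\<delta>*x)*(\<rho>*K) \<le> ((1-\<delta>)*\<rho>)*(\<rho>*K)"
    using assms(4,5) K0 by (intro mult_right_mono) auto
  have s5: "((1-\<delta>)*\<rho>)*(\<rho>*K) + (A+\<delta>)*\<delta>^2*\<rho>^2 = \<rho>^2 * (A + \<delta>*(2*\<delta>-1)^2)"
    unfolding K_def by (simp add: power2_eq_square algebra_simps)
  have s6: "\<rho>^2 * (A + \<delta>*(2*\<delta>-1)^2) \<le> \<rho>^2 * (c_delta \<delta> * \<delta>^2)"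
    using corner[OF assms(1,2)] unfolding A_def by (intro mult_left_mono) auto
  have "\<delta>^2 * (A*(x+\<rho>)^2 + \<delta>*(\<rho>-x)^2) \<le> \<delta>^2 * (c_delta \<delta> * \<rho>^2)"
    using g s2 s3 s4 s5 s6 by (simp add: algebra_simps) 
  then show ?thesis unfolding A_def using d0 by simp
qed

lemma R2: assumes "1/2 < \<delta>" "\<delta> < 1" "x < 0" "0 \<le> D" "D \<le> x + \<rho>" "0 \<le> \<rho>"
  shows "(1 + \<delta>*(1-\<delta>)^2)*D^2 + (x+\<rho>-D)^2 + \<delta>*(\<rho>-x)*\<rho> \<le> c_delta \<delta> * \<rho>^2"
proof -
  define A where "A = 1 + \<delta>*(1-\<delta>)^2"
  have d0: "0 < \<delta>" using assms by simp
  have A1: "1 \<le> A" unfolding A_def using d0 by simp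
  have "A*D^2 + (x+\<rho>-D)^2 \<le> A*(x+\<rho>)^2" using Am[OF A1 assms(4,5)] .
  also have "A*(x+\<rho>)^2 \<le> A*(\<rho>*(x+\<rho>))" unfolding power2_eq_square
    using A1 assms by (intro mult_left_mono mult_right_mono) auto
  finally have "A*D^2 + (x+\<rho>-D)^2 + \<delta>*(\<rho>-x)*\<rho> \<le> (A+\<delta>)*\<rho>^2 + (\<rho>*x)*(A-\<delta>)"
    by (simp add: power2_eq_square algebra_simps)
  moreover have "(\<rho>*x)*(A-\<delta>) \<le> 0"
  proof (rule mult_nonpos_nonneg)
    show "\<rho>*x \<le> 0" using assms(3,6) by (simp add: mult_nonneg_nonpos)
    show "0 \<le> A - \<delta>" using A1 assms(2) by simp
  qed
  moreover have "A + \<delta> \<le> c_delta \<delta>" using c_ge1[OF assms(1,2)] unfolding A_def by linarith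
  moreover have "(A+\<delta>)*\<rho>^2 \<le> c_delta \<delta>*\<rho>^2" using calculation(3) by (simp add: mult_right_mono)
  ultimately show ?thesis unfolding A_def by linarith
qed

definition sg :: "real \<Rightarrow> real \<Rightarrow> real" where "sg s p = (if s < p then 1 else -1)"

definition consec :: "real set \<Rightarrow> real \<Rightarrow> real \<Rightarrow> real \<Rightarrow> real \<Rightarrow> bool" where
 "consec P s e u v \<longleftrightarrow> u \<in> P \<and> v \<in> P \<and> 0 \<le> e*(u-s) \<and> e*(u-s) < e*(v-s) \<and>
    (\<forall>z\<in>P. \<not> (e*(u-s) < e*(z-s) \<and> e*(z-s) < e*(v-s)))"

lemma consec_disj:
  assumes "(e::real) = 1 \<or> e = -1" "consec P s e u v" "consec P s e u' v'" "u \<noteq> u'"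
  shows "e*(v-s) \<le> e*(u'-s) \<or> e*(v'-s) \<le> e*(u-s)"
proof -
  have ne: "e*(u-s) \<noteq> e*(u'-s)" using assms(1,4) by auto
  show ?thesis
  proof (cases "e*(u-s) < e*(u'-s)")
    case True
    have "u' \<in> P" using assms(3) unfolding consec_def by blast
    then have "\<not> (e*(u-s) < e*(u'-s) \<and> e*(u'-s) < e*(v-s))" using assms(2) unfolding consec_def by blast
    then show ?thesis using True by linarith
  next
    case False
    then have lt: "e*(u'-s) < e*(u-s)" using ne by linarith
    have "u \<in> P" using assms(2) unfolding consec_def by blast
    then have "\<not> (e*(u'-s) < e*(u-s) \<and> e*(u-s) < e*(v'-s))" using assms(3) unfolding consec_def by blast
    then show ?thesis using lt by linarith
  qed
qed

lemma suc_consec: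
  assumes "finite P" "p \<in> P" "p \<noteq> s" "suc P s p = Some q"
  shows "consec P s (sg s p) p q \<and> 0 < sg s p * (p - s)"
proof (cases "s < p")
  case True
  let ?A = "{q\<in>P. q > p}"
  have ex: "\<exists>q\<in>P. q > p" and qd: "q = Min ?A"
    using assms(4) True unfolding suc_def by (auto split: if_splits)
  have fin: "finite ?A" using assms(1) by simp
  have ne: "?A \<noteq> {}" using ex by blast
  have qA: "q \<in> ?A" unfolding qd using fin ne by (rule Min_in)
  have qmin: "q \<le> z" if "z \<in> ?A" for z unfolding qd using fin that by (rule Min_le)
  have "\<forall>z\<in>P. \<not> (p - s < z - s \<and> z - s < q - s)"
  proof (intro ballI notI)
    fix z assume "z \<in> P" "p - s < z - s \<and> z - s < q - s"
    then show False using qmin[of z] by auto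
  qed
  then show ?thesis using True qA assms(2) unfolding consec_def sg_def by auto
next
  case False
  then have lt: "p < s" using assms(3) by auto
  let ?A = "{q\<in>P. q < p}"
  have ex: "\<exists>q\<in>P. q < p" and qd: "q = Max ?A"
    using assms(4) lt unfolding suc_def by (auto split: if_splits)
  have fin: "finite ?A" using assms(1) by simp
  have ne: "?A \<noteq> {}" using ex by blast
  have qA: "q \<in> ?A" unfolding qd using fin ne by (rule Max_in)
  have qmax: "z \<le> q" if "z \<in> ?A" for z unfolding qd using fin that by (rule Max_ge)
  have "\<forall>z\<in>P. \<not> (-1*(p - s) < -1*(z - s) \<and> -1*(z - s) < -1*(q - s))"
  proof (intro ballI notI)
    fix z assume "z \<in> P" "-1*(p - s) < -1*(z - s) \<and> -1*(z - s) < -1*(q - s)"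
    then show False using qmax[of z] by auto
  qed
  then show ?thesis using lt qA assms(2) unfolding consec_def sg_def by auto
qed

lemma src_consec:
  assumes "finite P" "s \<in> P" "q \<in> succs_src P s"
  shows "consec P s (sg s q) s q \<and> 0 < sg s q * (q - s)"
proof -
  have "q = Min {q\<in>P. q > s} \<and> (\<exists>q\<in>P. q > s) \<or> q = Max {q\<in>P. q < s} \<and> (\<exists>q\<in>P. q < s)"
    using assms(3) unfolding succs_src_def by (auto split: if_splits)
  then show ?thesis
  proof
    assume h: "q = Min {q\<in>P. q > s} \<and> (\<exists>q\<in>P. q > s)"
    let ?A = "{q\<in>P. q > s}"
    have fin: "finite ?A" using assms(1) by simp
    have ne: "?A \<noteq> {}" using h by blast
    have qA: "q \<in> ?A" using h Min_in[OF fin ne] by simp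
    have qmin: "q \<le> z" if "z \<in> ?A" for z using h Min_le[OF fin that] by simp
    have "\<forall>z\<in>P. \<not> (s - s < z - s \<and> z - s < q - s)"
    proof (intro ballI notI)
      fix z assume "z \<in> P" "s - s < z - s \<and> z - s < q - s"
      then show False using qmin[of z] by auto
    qed
    then show ?thesis using qA assms(2) unfolding consec_def sg_def by auto
  next
    assume h: "q = Max {q\<in>P. q < s} \<and> (\<exists>q\<in>P. q < s)"
    let ?A = "{q\<in>P. q < s}"
    have fin: "finite ?A" using assms(1) by simp
    have ne: "?A \<noteq> {}" using h by blast
    have qA: "q \<in> ?A" using h Max_in[OF fin ne] by simp
    have qmax: "z \<le> q" if "z \<in> ?A" for z using h Max_ge[OF fin that] by simp
    have "\<forall>z\<in>P. \<not> (-1*(s - s) < -1*(z - s) \<and> -1*(z - s) < -1*(q - s))"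
    proof (intro ballI notI)
      fix z assume "z \<in> P" "-1*(s - s) < -1*(z - s) \<and> -1*(z - s) < -1*(q - s)"
      then show False using qmax[of z] by auto
    qed
    then show ?thesis using qA assms(2) unfolding consec_def sg_def by auto
  qed
qed

lemma cover:
  assumes "feasible P s \<rho>" "(e::real) = 1 \<or> e = -1" "q \<in> P" "0 < e*(q-s)" "s \<in> P"
  shows "\<exists>t\<in>P. e*(t-s) < e*(q-s) \<and> e*(q-s) \<le> e*(t-s) + \<rho> t"
proof (rule ccontr)
  assume H: "\<not> ?thesis"
  have "z \<in> P \<and> e*(z-s) < e*(q-s)" if "(s, z) \<in> (edges P \<rho>)\<^sup>*" for z
    using that
  proof (induction rule: rtrancl_induct)
    case base
    then show ?case using assms(4,5) by simp
  next
    case (step y z)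
    have yz: "y \<in> P" "z \<in> P" "\<bar>y - z\<bar> \<le> \<rho> y" using step.hyps(2) unfolding edges_def by auto
    have ez: "e*(z-y) \<le> \<bar>y - z\<bar>" using assms(2) by auto
    show ?case
    proof (rule ccontr)
      assume "\<not> (z \<in> P \<and> e*(z-s) < e*(q-s))"
      then have "e*(q-s) \<le> e*(z-s)" using yz by auto
      moreover have "e*(z-s) = e*(y-s) + e*(z-y)" by (simp add: algebra_simps)
      ultimately have "e*(q-s) \<le> e*(y-s) + \<rho> y" using ez yz by linarith
      then show False using H step.IH yz(1) by blast
    qed
  qed
  moreover have "(s, q) \<in> (edges P \<rho>)\<^sup>*" using assms(1,3) unfolding feasible_def by blast
  ultimately show False by blast
qed

lemma abs_e: "((e::real) = 1 \<or> e = -1) \<Longrightarrow> 0 < e*y \<Longrightarrow> \<bar>y\<bar> = e*y"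
  by auto

locale setting =
  fixes P :: "real set" and s \<delta> :: real and \<rho> :: "real \<Rightarrow> real"
  assumes finP: "finite P" and sP: "s \<in> P" and dl: "1/2 < \<delta>" and du: "\<delta> < 1"
    and feas: "feasible P s \<rho>"
begin

definition Cs where "Cs = {p\<in>P. p \<noteq> s \<and> \<not> expensive P s \<delta> p \<and> suc P s p \<noteq> None}"
definition nq where "nq p = the (suc P s p)"
definition Tr where "Tr p = (SOME t. t\<in>P \<and> sg s p*(t-s) < sg s p*(nq p - s) \<and> sg s p*(nq p - s) \<le> sg s p*(t-s) + \<rho> t)"
definition Sd where "Sd e t = {p\<in>Cs. Tr p = t \<and> 0 < e*(p-s)}"

lemma rho_nn: "t \<in> P \<Longrightarrow> 0 \<le> \<rho> t" using feas unfolding feasible_def by auto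

lemma sg_pm: "sg s p = 1 \<or> sg s p = -1" unfolding sg_def by auto

lemma C_facts:
  assumes "p \<in> Cs"
  shows "consec P s (sg s p) p (nq p)" "0 < sg s p*(p-s)" "suc P s p = Some (nq p)"
    "\<not> expensive P s \<delta> p" "p \<in> P" "p \<noteq> s"
proof -
  have h: "p \<in> P" "p \<noteq> s" "\<not> expensive P s \<delta> p" "suc P s p \<noteq> None" using assms unfolding Cs_def by auto
  then show sq: "suc P s p = Some (nq p)" unfolding nq_def by auto
  show "consec P s (sg s p) p (nq p)" "0 < sg s p*(p-s)" using suc_consec[OF finP h(1,2) sq] by auto
  show "\<not> expensive P s \<delta> p" "p \<in> P" "p \<noteq> s" using h by auto
qed

lemma C_cheap: assumes "p \<in> Cs" shows "\<bar>p - nq p\<bar> \<le> \<delta>*\<bar>s - nq p\<bar>"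
  using C_facts[OF assms] unfolding expensive_def by force

lemma C_T: assumes "p \<in> Cs"
  shows "Tr p \<in> P \<and> sg s p*(Tr p - s) < sg s p*(nq p - s) \<and> sg s p*(nq p - s) \<le> sg s p*(Tr p - s) + \<rho> (Tr p)"
proof -
  have c: "consec P s (sg s p) p (nq p)" using C_facts[OF assms] by auto
  then have "nq p \<in> P" "0 < sg s p*(nq p - s)" unfolding consec_def by auto
  then have "\<exists>t\<in>P. sg s p*(t-s) < sg s p*(nq p - s) \<and> sg s p*(nq p - s) \<le> sg s p*(t-s) + \<rho> t"
    using cover[OF feas sg_pm _ _ sP] by blast
  then have "\<exists>t. t\<in>P \<and> sg s p*(t-s) < sg s p*(nq p - s) \<and> sg s p*(nq p - s) \<le> sg s p*(t-s) + \<rho> t" by blast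
  then show ?thesis unfolding Tr_def by (rule someI_ex)
qed

lemma rho_sb_C: "p \<in> Cs \<Longrightarrow> rho_sb P s \<delta> p = \<bar>p - nq p\<bar>"
  using C_facts[of p] unfolding rho_sb_def rho_st_def by auto

lemma rho_sb_notC: "p \<in> P \<Longrightarrow> p \<noteq> s \<Longrightarrow> p \<notin> Cs \<Longrightarrow> rho_sb P s \<delta> p = 0"
  unfolding rho_sb_def rho_st_def Cs_def by auto

lemma side:
  assumes e: "e = 1 \<or> e = -1" and p: "p \<in> Sd e t"
  shows "sg s p = e" "0 < e*(p-s)" "e*(p-s) < e*(nq p - s)" "e*(t-s) \<le> e*(p-s)"
    "e*(nq p - s) \<le> e*(t-s) + \<rho> t" "e*(nq p - s) - e*(p-s) \<le> \<delta>*(e*(nq p - s))"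
    "(p - nq p)^2 = (e*(nq p - s) - e*(p-s))^2" "consec P s e p (nq p)" "p \<in> Cs" "t \<in> P"
proof -
  have pC: "p \<in> Cs" and tt: "Tr p = t" and pos: "0 < e*(p-s)" using p unfolding Sd_def by auto
  show "p \<in> Cs" "0 < e*(p-s)" by fact+
  show sgp: "sg s p = e" using e pos unfolding sg_def by auto
  have c: "consec P s e p (nq p)" using C_facts(1)[OF pC] sgp by simp
  show "consec P s e p (nq p)" by fact
  show lt: "e*(p-s) < e*(nq p - s)" using c unfolding consec_def by auto
  have T: "t \<in> P" "e*(t-s) < e*(nq p - s)" "e*(nq p - s) \<le> e*(t-s) + \<rho> t"
    using C_T[OF pC] sgp tt by auto
  show "t \<in> P" "e*(nq p - s) \<le> e*(t-s) + \<rho> t" using T by auto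
  have "\<not> (e*(p-s) < e*(t-s) \<and> e*(t-s) < e*(nq p - s))" using c T(1) unfolding consec_def by blast
  then show "e*(t-s) \<le> e*(p-s)" using T(2) by linarith
  have a1: "\<bar>p - nq p\<bar> = e*(nq p - s) - e*(p-s)"
  proof -
    have "0 < e*(nq p - p)" using lt by (simp add: algebra_simps)
    then have "\<bar>nq p - p\<bar> = e*(nq p - p)" using abs_e[OF e] by blast
    then show ?thesis by (simp add: abs_minus_commute algebra_simps)
  qed
  have a2: "\<bar>s - nq p\<bar> = e*(nq p - s)"
  proof -
    have "0 < e*(nq p - s)" using lt pos by linarith
    then have "\<bar>nq p - s\<bar> = e*(nq p - s)" using abs_e[OF e] by blast
    then show ?thesis by (simp add: abs_minus_commute)
  qed
  show "e*(nq p - s) - e*(p-s) \<le> \<delta>*(e*(nq p - s))" using C_cheap[OF pC] a1 a2 by simp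
  have "(p - nq p)^2 = \<bar>p - nq p\<bar>^2" by simp
  then show "(p - nq p)^2 = (e*(nq p - s) - e*(p-s))^2" using a1 by simp
qed

lemma Sd_sub: "Sd e t \<subseteq> P" unfolding Sd_def Cs_def by auto

lemma side_sum:
  assumes e: "e = 1 \<or> e = -1" and X: "X \<subseteq> Sd e t"
    and b: "\<forall>p\<in>X. lo \<le> e*(p-s) \<and> e*(nq p - s) \<le> hi \<and> e*(nq p - s) - e*(p-s) \<le> M" and M: "0 \<le> M"
  shows "(\<Sum>p\<in>X. (p - nq p)^2) \<le> M * max 0 (hi - lo)"
proof -
  have fin: "finite X" by (rule finite_subset[OF subset_trans[OF X Sd_sub] finP])
  have "(\<Sum>p\<in>X. (p - nq p)^2) = (\<Sum>p\<in>X. ((\<lambda>p. e*(nq p - s)) p - (\<lambda>p. e*(p-s)) p)^2)"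
  proof (rule sum.cong[OF refl])
    fix p assume "p \<in> X"
    then have "p \<in> Sd e t" using X by blast
    then show "(p - nq p)^2 = ((\<lambda>p. e*(nq p - s)) p - (\<lambda>p. e*(p-s)) p)^2"
      using side(7)[OF e] by simp
  qed
  also have "\<dots> \<le> M * max 0 (hi - lo)"
  proof (rule intervals_sq[where u="\<lambda>p. e*(p-s)" and v="\<lambda>p. e*(nq p - s)" and lo=lo and hi=hi, OF fin _ _ _ M])
    show "\<forall>p\<in>X. lo \<le> e*(p-s) \<and> e*(p-s) < e*(nq p - s) \<and> e*(nq p - s) \<le> hi"
    proof
      fix p assume hp: "p \<in> X"
      then have "p \<in> Sd e t" using X by blast
      then have "e*(p-s) < e*(nq p - s)" by (rule side(3)[OF e])
      then show "lo \<le> e*(p-s) \<and> e*(p-s) < e*(nq p - s) \<and> e*(nq p - s) \<le> hi" using b hp by simp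
    qed
    show "\<forall>p\<in>X. e*(nq p - s) - e*(p-s) \<le> M" using b by blast
    show "\<forall>p\<in>X. \<forall>p'\<in>X. p \<noteq> p' \<longrightarrow> e*(nq p - s) \<le> e*(p'-s) \<or> e*(nq p' - s) \<le> e*(p-s)"
    proof (intro ballI impI)
      fix p p' assume h: "p \<in> X" "p' \<in> X" "p \<noteq> p'"
      then have "p \<in> Sd e t" "p' \<in> Sd e t" using X by blast+
      then show "e*(nq p - s) \<le> e*(p'-s) \<or> e*(nq p' - s) \<le> e*(p-s)"
        using consec_disj[OF e side(8)[OF e] side(8)[OF e] h(3)] by blast
    qed
  qed
  finally show ?thesis .
qed


lemma Sd_fin: "finite (Sd e t)" by (rule finite_subset[OF Sd_sub finP])

lemma sum_sides:
  assumes "e = 1 \<or> e = -1"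
  shows "(\<Sum>p\<in>Sd 1 t. f p) + (\<Sum>p\<in>Sd (-1) t. f p) = (\<Sum>p\<in>Sd e t. f p) + (\<Sum>p\<in>Sd (-e) t. f p)"
  using assms by (auto simp: add.commute)

lemma fiber_general:
  assumes t: "t \<in> P"
  shows "(\<Sum>p\<in>Sd 1 t. (p - nq p)^2) + (\<Sum>p\<in>Sd (-1) t. (p - nq p)^2) \<le> (1+\<delta>)*(\<rho> t)^2"
proof -
  define e0 where "e0 = (if s \<le> t then 1 else -1::real)"
  have e0: "e0 = 1 \<or> e0 = -1" unfolding e0_def by auto
  have me0: "-e0 = 1 \<or> -e0 = -1" unfolding e0_def by auto
  define x where "x = e0*(t-s)"
  have x0: "0 \<le> x" unfolding x_def e0_def by auto
  define r where "r = \<rho> t"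
  have r0: "0 \<le> r" unfolding r_def using rho_nn[OF t] .
  have d0: "0 < \<delta>" using dl by simp
  have eq: "(\<Sum>p\<in>Sd 1 t. (p - nq p)^2) + (\<Sum>p\<in>Sd (-1) t. (p - nq p)^2)
      = (\<Sum>p\<in>Sd e0 t. (p - nq p)^2) + (\<Sum>p\<in>Sd (-e0) t. (p - nq p)^2)"
    by (rule sum_sides[OF e0])
  show ?thesis
  proof (cases "x \<le> r")
    case True
    have A: "(\<Sum>p\<in>Sd e0 t. (p - nq p)^2) \<le> (\<delta>*(x+r)) * max 0 ((x+r) - x)"
    proof (rule side_sum[OF e0 subset_refl])
      show "0 \<le> \<delta>*(x+r)" using d0 x0 r0 by simp
      show "\<forall>p\<in>Sd e0 t. x \<le> e0*(p-s) \<and> e0*(nq p - s) \<le> x+r \<and> e0*(nq p - s) - e0*(p-s) \<le> \<delta>*(x+r)"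
      proof
        fix p assume p: "p \<in> Sd e0 t"
        have h: "e0*(t-s) \<le> e0*(p-s)" "e0*(nq p - s) \<le> e0*(t-s) + \<rho> t"
          "e0*(nq p - s) - e0*(p-s) \<le> \<delta>*(e0*(nq p - s))"
          using side[OF e0 p] by auto
        have "\<delta>*(e0*(nq p - s)) \<le> \<delta>*(x+r)" using h(2) d0 unfolding x_def r_def by simp
        then show "x \<le> e0*(p-s) \<and> e0*(nq p - s) \<le> x+r \<and> e0*(nq p - s) - e0*(p-s) \<le> \<delta>*(x+r)"
          using h unfolding x_def r_def by linarith
      qed
    qed
    have B: "(\<Sum>p\<in>Sd (-e0) t. (p - nq p)^2) \<le> (\<delta>*(r-x)) * max 0 ((r-x) - 0)"
    proof (rule side_sum[OF me0 subset_refl])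
      show "0 \<le> \<delta>*(r-x)" using d0 True by simp
      show "\<forall>p\<in>Sd (-e0) t. 0 \<le> (-e0)*(p-s) \<and> (-e0)*(nq p - s) \<le> r-x \<and> (-e0)*(nq p - s) - (-e0)*(p-s) \<le> \<delta>*(r-x)"
      proof
        fix p assume p: "p \<in> Sd (-e0) t"
        have h: "0 < (-e0)*(p-s)" "(-e0)*(nq p - s) \<le> (-e0)*(t-s) + \<rho> t"
          "(-e0)*(nq p - s) - (-e0)*(p-s) \<le> \<delta>*((-e0)*(nq p - s))"
          using side[OF me0 p] by auto
        have h2: "(-e0)*(nq p - s) \<le> r - x" using h(2) unfolding x_def r_def by simp
        have "\<delta>*((-e0)*(nq p - s)) \<le> \<delta>*(r-x)" using mult_left_mono[OF h2, of \<delta>] d0 by simp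
        then show "0 \<le> (-e0)*(p-s) \<and> (-e0)*(nq p - s) \<le> r-x \<and> (-e0)*(nq p - s) - (-e0)*(p-s) \<le> \<delta>*(r-x)"
          using h h2 by linarith
      qed
    qed
    have "\<delta>*(x+r)*max 0 ((x+r) - x) + \<delta>*(r-x)*max 0 ((r-x) - 0) = \<delta>*(2*r^2) - \<delta>*(x*(r-x))"
      using r0 True by (simp add: power2_eq_square algebra_simps)
    moreover have "0 \<le> \<delta>*(x*(r-x))" using d0 x0 True by simp
    moreover have "\<delta>*(2*r^2) \<le> (1+\<delta>)*r^2"
    proof -
      have "2*\<delta> \<le> 1+\<delta>" using du by simp
      then have "2*\<delta>*r^2 \<le> (1+\<delta>)*r^2" by (rule mult_right_mono) simp
      then show ?thesis by simp
    qed
    ultimately show ?thesis using eq A B unfolding r_def by linarith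
  next
    case False
    have A: "(\<Sum>p\<in>Sd e0 t. (p - nq p)^2) \<le> r * max 0 ((x+r) - x)"
    proof (rule side_sum[OF e0 subset_refl _ r0])
      show "\<forall>p\<in>Sd e0 t. x \<le> e0*(p-s) \<and> e0*(nq p - s) \<le> x+r \<and> e0*(nq p - s) - e0*(p-s) \<le> r"
      proof
        fix p assume p: "p \<in> Sd e0 t"
        have h: "e0*(t-s) \<le> e0*(p-s)" "e0*(nq p - s) \<le> e0*(t-s) + \<rho> t"
          using side[OF e0 p] by auto
        then show "x \<le> e0*(p-s) \<and> e0*(nq p - s) \<le> x+r \<and> e0*(nq p - s) - e0*(p-s) \<le> r"
          unfolding x_def r_def by linarith
      qed
    qed
    have B: "Sd (-e0) t = {}"
    proof (rule ccontr)
      assume "Sd (-e0) t \<noteq> {}"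
      then obtain p where p: "p \<in> Sd (-e0) t" by blast
      have h: "0 < (-e0)*(p-s)" "(-e0)*(p-s) < (-e0)*(nq p - s)" "(-e0)*(nq p - s) \<le> (-e0)*(t-s) + \<rho> t"
        using side[OF me0 p] by auto
      then show False using False unfolding x_def r_def by simp
    qed
    have "r * max 0 ((x+r) - x) = r^2" using r0 by (simp add: power2_eq_square)
    moreover have "r^2 \<le> (1+\<delta>)*r^2" using mult_right_mono[of 1 "1+\<delta>" "r^2"] d0 by simp
    ultimately show ?thesis using eq A B unfolding r_def by simp
  qed
qed


lemma fiber_star:
  assumes e: "e = 1 \<or> e = -1" and c: "consec P s e pr q" and prC: "pr \<notin> Cs"
    and a_lt: "e*(pr-s) < (1-\<delta>)*(e*(q-s))" and t: "t \<in> P"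
    and tq: "e*(t-s) < e*(q-s)" and tq2: "e*(q-s) \<le> e*(t-s) + \<rho> t"
  shows "(e*(q-s))^2 + ((\<Sum>p\<in>Sd 1 t. (p - nq p)^2) + (\<Sum>p\<in>Sd (-1) t. (p - nq p)^2)) \<le> c_delta \<delta> * (\<rho> t)^2"
proof -
  define D where "D = e*(q-s)"
  define a where "a = e*(pr-s)"
  define x where "x = e*(t-s)"
  define r where "r = \<rho> t"
  define L where "L = {p. e*(nq p - s) \<le> a}"
  have me: "-e = 1 \<or> -e = -1" using e by auto
  have d0: "0 < \<delta>" using dl by simp
  have r0: "0 \<le> r" unfolding r_def using rho_nn[OF t] .
  have a0: "0 \<le> a" and aD: "a < D" using c unfolding consec_def a_def D_def by auto
  have "\<forall>z\<in>P. \<not> (e*(pr-s) < e*(z-s) \<and> e*(z-s) < e*(q-s))" using c unfolding consec_def by blast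
  then have "\<not> (a < x \<and> x < D)" using t unfolding a_def D_def x_def by blast
  then have xa: "x \<le> a" using tq unfolding x_def D_def by linarith
  have aD2: "a < (1-\<delta>)*D" using a_lt unfolding a_def D_def .
  have Dxr: "D \<le> x + r" using tq2 unfolding D_def x_def r_def .
  have eq: "(\<Sum>p\<in>Sd 1 t. (p - nq p)^2) + (\<Sum>p\<in>Sd (-1) t. (p - nq p)^2)
      = (\<Sum>p\<in>Sd e t \<inter> L. (p - nq p)^2) + (\<Sum>p\<in>Sd e t - L. (p - nq p)^2) + (\<Sum>p\<in>Sd (-e) t. (p - nq p)^2)"
  proof -
    have e1: "(\<Sum>p\<in>Sd 1 t. (p - nq p)^2) + (\<Sum>p\<in>Sd (-1) t. (p - nq p)^2)
      = (\<Sum>p\<in>Sd e t. (p - nq p)^2) + (\<Sum>p\<in>Sd (-e) t. (p - nq p)^2)" by (rule sum_sides[OF e])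
    have e2: "(\<Sum>p\<in>Sd e t. (p - nq p)^2) = (\<Sum>p\<in>Sd e t \<inter> L. (p - nq p)^2) + (\<Sum>p\<in>Sd e t - L. (p - nq p)^2)"
      by (rule sum.Int_Diff[OF Sd_fin])
    show ?thesis using e1 e2 by linarith
  qed
  have LO: "(\<Sum>p\<in>Sd e t \<inter> L. (p - nq p)^2) \<le> (\<delta>*a) * max 0 (a - 0)"
  proof (rule side_sum[OF e Int_lower1])
    show "0 \<le> \<delta>*a" using d0 a0 by simp
    show "\<forall>p\<in>Sd e t \<inter> L. 0 \<le> e*(p-s) \<and> e*(nq p - s) \<le> a \<and> e*(nq p - s) - e*(p-s) \<le> \<delta>*a"
    proof
      fix p assume p: "p \<in> Sd e t \<inter> L"
      then have pS: "p \<in> Sd e t" and pL: "e*(nq p - s) \<le> a" unfolding L_def by auto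
      have h: "0 < e*(p-s)" "e*(nq p - s) - e*(p-s) \<le> \<delta>*(e*(nq p - s))" using side[OF e pS] by auto
      have "\<delta>*(e*(nq p - s)) \<le> \<delta>*a" using mult_left_mono[OF pL, of \<delta>] d0 by simp
      then show "0 \<le> e*(p-s) \<and> e*(nq p - s) \<le> a \<and> e*(nq p - s) - e*(p-s) \<le> \<delta>*a" using h pL by linarith
    qed
  qed
  have HI: "(\<Sum>p\<in>Sd e t - L. (p - nq p)^2) \<le> (x+r-D) * max 0 ((x+r) - D)"
  proof (rule side_sum[OF e Diff_subset])
    show "0 \<le> x+r-D" using Dxr by simp
    show "\<forall>p\<in>Sd e t - L. D \<le> e*(p-s) \<and> e*(nq p - s) \<le> x+r \<and> e*(nq p - s) - e*(p-s) \<le> x+r-D"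
    proof
      fix p assume p: "p \<in> Sd e t - L"
      then have pS: "p \<in> Sd e t" and pL: "\<not> e*(nq p - s) \<le> a" unfolding L_def by auto
      have pC: "p \<in> Cs" using side(9)[OF e pS] .
      have ne: "p \<noteq> pr" using pC prC by blast
      have "e*(nq p - s) \<le> e*(pr-s) \<or> e*(q-s) \<le> e*(p-s)"
        using consec_disj[OF e side(8)[OF e pS] c ne] .
      then have Du: "D \<le> e*(p-s)" using pL unfolding a_def D_def by blast
      have h: "e*(nq p - s) \<le> e*(t-s) + \<rho> t" using side[OF e pS] by auto
      then show "D \<le> e*(p-s) \<and> e*(nq p - s) \<le> x+r \<and> e*(nq p - s) - e*(p-s) \<le> x+r-D"
        using Du unfolding x_def r_def by linarith
    qed
  qed
  define A where "A = 1 + \<delta>*(1-\<delta>)^2"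
  have A1: "1 \<le> A" unfolding A_def using d0 by simp
  have aa: "\<delta>*a * max 0 (a - 0) \<le> \<delta>*(1-\<delta>)^2*D^2"
  proof -
    have "a^2 \<le> ((1-\<delta>)*D)^2" using a0 aD2 by (intro power_mono) auto
    then have "\<delta>*a^2 \<le> \<delta>*((1-\<delta>)*D)^2" using d0 by simp
    then show ?thesis using a0 by (simp add: power2_eq_square algebra_simps)
  qed
  have hi2: "(x+r-D) * max 0 ((x+r) - D) = (x+r-D)^2" using Dxr by (simp add: power2_eq_square)
  have core: "D^2 + \<delta>*(1-\<delta>)^2*D^2 = A*D^2" unfolding A_def by (simp add: algebra_simps)
  show ?thesis
  proof (cases "0 \<le> x")
    case True
    have OT: "(\<Sum>p\<in>Sd (-e) t. (p - nq p)^2) \<le> (\<delta>*max 0 (r-x)) * max 0 ((r-x) - 0)"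
    proof (rule side_sum[OF me subset_refl])
      show "0 \<le> \<delta>*max 0 (r-x)" using d0 by simp
      show "\<forall>p\<in>Sd (-e) t. 0 \<le> (-e)*(p-s) \<and> (-e)*(nq p - s) \<le> r-x \<and> (-e)*(nq p - s) - (-e)*(p-s) \<le> \<delta>*max 0 (r-x)"
      proof
        fix p assume p: "p \<in> Sd (-e) t"
        have h: "0 < (-e)*(p-s)" "(-e)*(nq p - s) \<le> (-e)*(t-s) + \<rho> t"
          "(-e)*(nq p - s) - (-e)*(p-s) \<le> \<delta>*((-e)*(nq p - s))"
          using side[OF me p] by auto
        have h2: "(-e)*(nq p - s) \<le> r - x" using h(2) unfolding x_def r_def by simp
        have "\<delta>*((-e)*(nq p - s)) \<le> \<delta>*(r-x)" using mult_left_mono[OF h2, of \<delta>] d0 by simp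
        moreover have "\<delta>*(r-x) \<le> \<delta>*max 0 (r-x)" using d0 by simp
        ultimately show "0 \<le> (-e)*(p-s) \<and> (-e)*(nq p - s) \<le> r-x \<and> (-e)*(nq p - s) - (-e)*(p-s) \<le> \<delta>*max 0 (r-x)"
          using h h2 by linarith
      qed
    qed
    have ot2: "\<delta>*max 0 (r-x) * max 0 ((r-x) - 0) \<le> \<delta>*(r-x)^2"
    proof -
      have "max 0 (r-x) * max 0 (r-x) \<le> (r-x)^2" by (simp add: power2_eq_square max_def)
      then show ?thesis using d0 by (simp add: mult.assoc)
    qed
    have am: "A*D^2 + (x+r-D)^2 \<le> A*(x+r)^2" using Am[OF A1 _ Dxr] aD a0 by simp
    have dx: "\<delta>*x \<le> (1-\<delta>)*r"
    proof -
      have "(1-\<delta>)*D \<le> (1-\<delta>)*(x+r)" using Dxr du by (intro mult_left_mono) auto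
      then have "x \<le> (1-\<delta>)*(x+r)" using xa aD2 by linarith
      then show ?thesis by (simp add: algebra_simps)
    qed
    have "A*(x+r)^2 + \<delta>*(r-x)^2 \<le> c_delta \<delta> * r^2"
      using R1[OF dl du True dx r0] unfolding A_def .
    then show ?thesis using eq LO HI OT aa hi2 core am ot2 unfolding D_def r_def by linarith
  next
    case False
    have OT: "(\<Sum>p\<in>Sd (-e) t. (p - nq p)^2) \<le> (\<delta>*(r-x)) * max 0 ((r-x) - (-x))"
    proof (rule side_sum[OF me subset_refl])
      show "0 \<le> \<delta>*(r-x)" using d0 False r0 by simp
      show "\<forall>p\<in>Sd (-e) t. -x \<le> (-e)*(p-s) \<and> (-e)*(nq p - s) \<le> r-x \<and> (-e)*(nq p - s) - (-e)*(p-s) \<le> \<delta>*(r-x)"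
      proof
        fix p assume p: "p \<in> Sd (-e) t"
        have h: "(-e)*(t-s) \<le> (-e)*(p-s)" "(-e)*(nq p - s) \<le> (-e)*(t-s) + \<rho> t"
          "(-e)*(nq p - s) - (-e)*(p-s) \<le> \<delta>*((-e)*(nq p - s))"
          using side[OF me p] by auto
        have h1: "-x \<le> (-e)*(p-s)" using h(1) unfolding x_def by simp
        have h2: "(-e)*(nq p - s) \<le> r - x" using h(2) unfolding x_def r_def by simp
        have "\<delta>*((-e)*(nq p - s)) \<le> \<delta>*(r-x)" using mult_left_mono[OF h2, of \<delta>] d0 by simp
        then show "-x \<le> (-e)*(p-s) \<and> (-e)*(nq p - s) \<le> r-x \<and> (-e)*(nq p - s) - (-e)*(p-s) \<le> \<delta>*(r-x)"
          using h h1 h2 by linarith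
      qed
    qed
    have ot2: "\<delta>*(r-x) * max 0 ((r-x) - (-x)) = \<delta>*(r-x)*r" using r0 by simp
    have xn: "x < 0" using False by simp
    have "A*D^2 + (x+r-D)^2 + \<delta>*(r-x)*r \<le> c_delta \<delta> * r^2"
      using R2[OF dl du xn _ Dxr r0] aD a0 unfolding A_def by simp
    then show ?thesis using eq LO HI OT aa hi2 core ot2 unfolding D_def r_def by linarith
  qed
qed


lemma c_ge2: "1 + \<delta> \<le> c_delta \<delta>"
proof -
  have "0 \<le> \<delta>*(1-\<delta>)^2" using dl by simp
  then show ?thesis using c_ge1[OF dl du] by linarith
qed

lemma Cs_sub: "Cs \<subseteq> P - {s}" unfolding Cs_def by auto

lemma Cs_fin: "finite Cs" by (rule finite_subset[OF subset_trans[OF Cs_sub Diff_subset] finP])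

lemma cost_decomp: "cost2 P (rho_sb P s \<delta>) = (d_max P s \<delta>)^2 + (\<Sum>p\<in>Cs. (p - nq p)^2)"
proof -
  have e1: "cost2 P (rho_sb P s \<delta>) = (rho_sb P s \<delta> s)^2 + (\<Sum>p\<in>P-{s}. (rho_sb P s \<delta> p)^2)"
    unfolding cost2_def by (rule sum.remove[OF finP sP])
  have e2: "rho_sb P s \<delta> s = d_max P s \<delta>" by (simp add: rho_sb_def)
  have fin2: "finite (P - {s})" using finP by simp
  have e3: "(\<Sum>p\<in>P-{s}. (rho_sb P s \<delta> p)^2) = (\<Sum>p\<in>Cs. (rho_sb P s \<delta> p)^2)"
  proof (rule sum.mono_neutral_right[OF fin2 Cs_sub])
    show "\<forall>i\<in>P - {s} - Cs. (rho_sb P s \<delta> i)\<^sup>2 = 0" using rho_sb_notC by auto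
  qed
  have e4: "(\<Sum>p\<in>Cs. (rho_sb P s \<delta> p)^2) = (\<Sum>p\<in>Cs. (p - nq p)^2)"
  proof (rule sum.cong[OF refl])
    fix p assume "p \<in> Cs"
    then show "(rho_sb P s \<delta> p)^2 = (p - nq p)^2" using rho_sb_C by simp
  qed
  show ?thesis using e1 e2 e3 e4 by simp
qed

lemma decomp_T:
  "(\<Sum>p\<in>Cs. (p - nq p)^2) = (\<Sum>t\<in>P. (\<Sum>p\<in>Sd 1 t. (p - nq p)^2) + (\<Sum>p\<in>Sd (-1) t. (p - nq p)^2))"
proof -
  have img: "Tr ` Cs \<subseteq> P" using C_T by blast
  have g: "(\<Sum>t\<in>P. \<Sum>p\<in>{x. x \<in> Cs \<and> Tr x = t}. (p - nq p)^2) = (\<Sum>p\<in>Cs. (p - nq p)^2)"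
    by (rule sum.group[OF Cs_fin finP img])
  have "(\<Sum>p\<in>{x. x \<in> Cs \<and> Tr x = t}. (p - nq p)^2) = (\<Sum>p\<in>Sd 1 t. (p - nq p)^2) + (\<Sum>p\<in>Sd (-1) t. (p - nq p)^2)" for t
  proof -
    have un: "{x. x \<in> Cs \<and> Tr x = t} = Sd 1 t \<union> Sd (-1) t"
    proof
      show "{x. x \<in> Cs \<and> Tr x = t} \<subseteq> Sd 1 t \<union> Sd (-1) t"
      proof
        fix x assume "x \<in> {x. x \<in> Cs \<and> Tr x = t}"
        then have "x \<in> Cs" "Tr x = t" by auto
        moreover have "x \<noteq> s" using \<open>x \<in> Cs\<close> unfolding Cs_def by auto
        ultimately show "x \<in> Sd 1 t \<union> Sd (-1) t" unfolding Sd_def by auto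
      qed
      show "Sd 1 t \<union> Sd (-1) t \<subseteq> {x. x \<in> Cs \<and> Tr x = t}" unfolding Sd_def by auto
    qed
    have dj: "Sd 1 t \<inter> Sd (-1) t = {}" unfolding Sd_def by auto
    show ?thesis unfolding un by (rule sum.union_disjoint[OF Sd_fin Sd_fin dj])
  qed
  then show ?thesis using g by simp
qed

lemma dmax_zero: assumes "\<forall>q\<in>P. q = s" shows "d_max P s \<delta> = 0"
proof -
  have "succs_src P s = {}" using assms unfolding succs_src_def by auto
  then have X: "{\<bar>s - q\<bar> | q. q \<in> succs_src P s} = {}" by simp
  have Y: "{\<bar>s - q\<bar> | p q. p \<in> P \<and> p \<noteq> s \<and> expensive P s \<delta> p \<and> suc P s p = Some q} = {}"
    using assms by auto
  show ?thesis unfolding d_max_def X Y by simp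
qed

lemma dmax_att:
  assumes "\<exists>q\<in>P. q \<noteq> s"
  shows "\<exists>e pr q. (e = 1 \<or> e = -1) \<and> consec P s e pr q \<and> pr \<notin> Cs \<and> d_max P s \<delta> = e*(q-s)
     \<and> e*(pr-s) < (1-\<delta>)*(e*(q-s))"
proof -
  define X where "X = {\<bar>s - q\<bar> | q. q \<in> succs_src P s}"
  define Y where "Y = {\<bar>s - q\<bar> | p q. p \<in> P \<and> p \<noteq> s \<and> expensive P s \<delta> p \<and> suc P s p = Some q}"
  have dm: "d_max P s \<delta> = Max (insert 0 (X \<union> Y))" unfolding d_max_def X_def Y_def by simp
  have XP: "X \<subseteq> (\<lambda>q. \<bar>s - q\<bar>) ` P"
  proof
    fix z assume "z \<in> X"
    then obtain q where q: "q \<in> succs_src P s" "z = \<bar>s - q\<bar>" unfolding X_def by blast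
    then have "q \<in> P" using src_consec[OF finP sP q(1)] unfolding consec_def by blast
    then show "z \<in> (\<lambda>q. \<bar>s - q\<bar>) ` P" using q(2) by blast
  qed
  have YP: "Y \<subseteq> (\<lambda>q. \<bar>s - q\<bar>) ` P"
  proof
    fix z assume "z \<in> Y"
    then obtain p q where q: "p \<in> P" "p \<noteq> s" "suc P s p = Some q" "z = \<bar>s - q\<bar>" unfolding Y_def by blast
    then have "q \<in> P" using suc_consec[OF finP q(1,2,3)] unfolding consec_def by blast
    then show "z \<in> (\<lambda>q. \<bar>s - q\<bar>) ` P" using q(4) by blast
  qed
  have finI: "finite ((\<lambda>q. \<bar>s - q\<bar>) ` P)" using finP by simp
  have fin: "finite (insert 0 (X \<union> Y))"
    using finite_subset[OF XP finI] finite_subset[OF YP finI] by simp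
  have Min: "Max (insert 0 (X \<union> Y)) \<in> insert 0 (X \<union> Y)" using fin by (intro Max_in) auto
  obtain q0 where q0: "q0 \<in> P" "q0 \<noteq> s" using assms by blast
  have "\<exists>q1. q1 \<in> succs_src P s"
  proof (cases "s < q0")
    case True
    then have "\<exists>q\<in>P. q > s" using q0 by blast
    then show ?thesis unfolding succs_src_def by auto
  next
    case False
    then have "q0 < s" using q0 by auto
    then have "\<exists>q\<in>P. q < s" using q0 by blast
    then show ?thesis unfolding succs_src_def by auto
  qed
  then obtain q1 where q1: "q1 \<in> succs_src P s" by blast
  have "0 < sg s q1 * (q1 - s)" using src_consec[OF finP sP q1] by blast
  then have "q1 \<noteq> s" by auto
  then have pos1: "0 < \<bar>s - q1\<bar>" by simp
  have "\<bar>s - q1\<bar> \<in> X" using q1 unfolding X_def by blast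
  then have "\<bar>s - q1\<bar> \<le> Max (insert 0 (X \<union> Y))" using fin by (intro Max_ge) auto
  then have Dpos: "0 < d_max P s \<delta>" using pos1 dm by linarith
  then have "d_max P s \<delta> \<in> X \<union> Y" using Min dm by auto
  then show ?thesis
  proof
    assume "d_max P s \<delta> \<in> X"
    then obtain q where q: "q \<in> succs_src P s" "d_max P s \<delta> = \<bar>s - q\<bar>" unfolding X_def by blast
    have c: "consec P s (sg s q) s q" and pos: "0 < sg s q * (q - s)" using src_consec[OF finP sP q(1)] by auto
    have "\<bar>q - s\<bar> = sg s q * (q - s)" using abs_e[OF sg_pm pos] .
    then have D: "d_max P s \<delta> = sg s q * (q - s)" using q(2) by (simp add: abs_minus_commute)
    have sC: "s \<notin> Cs" unfolding Cs_def by auto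
    have "0 < (1-\<delta>)*(sg s q*(q-s))" using du pos by simp
    then show ?thesis using c sC D sg_pm[of q] by (intro exI[of _ "sg s q"] exI[of _ s] exI[of _ q]) simp
  next
    assume "d_max P s \<delta> \<in> Y"
    then obtain p q where pq: "p \<in> P" "p \<noteq> s" "expensive P s \<delta> p" "suc P s p = Some q" "d_max P s \<delta> = \<bar>s - q\<bar>"
      unfolding Y_def by blast
    define e where "e = sg s p"
    have e: "e = 1 \<or> e = -1" unfolding e_def by (rule sg_pm)
    have c: "consec P s e p q" and pos: "0 < e*(p-s)" using suc_consec[OF finP pq(1,2,4)] unfolding e_def by auto
    have lt: "e*(p-s) < e*(q-s)" using c unfolding consec_def by auto
    have pC: "p \<notin> Cs" using pq(3) unfolding Cs_def by auto
    have ex: "\<bar>p - q\<bar> > \<delta>*\<bar>s - q\<bar>" using pq(2,3,4) unfolding expensive_def by auto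
    have a1: "\<bar>p - q\<bar> = e*(q - s) - e*(p-s)"
    proof -
      have "0 < e*(q - p)" using lt by (simp add: algebra_simps)
      then have "\<bar>q - p\<bar> = e*(q - p)" using abs_e[OF e] by blast
      then show ?thesis by (simp add: abs_minus_commute algebra_simps)
    qed
    have a2: "\<bar>s - q\<bar> = e*(q - s)"
    proof -
      have "0 < e*(q - s)" using lt pos by linarith
      then have "\<bar>q - s\<bar> = e*(q - s)" using abs_e[OF e] by blast
      then show ?thesis by (simp add: abs_minus_commute)
    qed
    have "e*(p-s) < (1-\<delta>)*(e*(q-s))" using ex a1 a2 by (simp add: algebra_simps)
    then show ?thesis using e c pC pq(5) a2 by (intro exI[of _ e] exI[of _ p] exI[of _ q]) simp
  qed
qed

lemma main_bound: "cost2 P (rho_sb P s \<delta>) \<le> c_delta \<delta> * cost2 P \<rho>"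
proof -
  define F where "F t = (\<Sum>p\<in>Sd 1 t. (p - nq p)^2) + (\<Sum>p\<in>Sd (-1) t. (p - nq p)^2)" for t
  have cost: "cost2 P (rho_sb P s \<delta>) = (d_max P s \<delta>)^2 + (\<Sum>t\<in>P. F t)"
    using cost_decomp decomp_T unfolding F_def by simp
  have c1: "1 + \<delta> \<le> c_delta \<delta>" by (rule c_ge2)
  have cnn: "0 \<le> c_delta \<delta>" using c1 dl by linarith
  have cost2nn: "0 \<le> cost2 P \<rho>" unfolding cost2_def by (simp add: sum_nonneg)
  show ?thesis
  proof (cases "\<forall>q\<in>P. q = s")
    case True
    have "Cs = {}" using True unfolding Cs_def by auto
    then have "(\<Sum>p\<in>Cs. (p - nq p)^2) = 0" by simp
    then have "cost2 P (rho_sb P s \<delta>) = 0" using cost_decomp dmax_zero[OF True] by simp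
    then show ?thesis using cnn cost2nn by simp
  next
    case False
    then have "\<exists>q\<in>P. q \<noteq> s" by blast
    then obtain e pr q where h: "e = 1 \<or> e = -1" "consec P s e pr q" "pr \<notin> Cs" "d_max P s \<delta> = e*(q-s)"
      "e*(pr-s) < (1-\<delta>)*(e*(q-s))" using dmax_att by blast
    have qP: "q \<in> P" and qpos: "0 < e*(q-s)" using h(2) unfolding consec_def by auto
    obtain t where t: "t \<in> P" "e*(t-s) < e*(q-s)" "e*(q-s) \<le> e*(t-s) + \<rho> t"
      using cover[OF feas h(1) qP qpos sP] by blast
    have star: "(d_max P s \<delta>)^2 + F t \<le> c_delta \<delta> * (\<rho> t)^2"
      using fiber_star[OF h(1,2,3,5) t] h(4) unfolding F_def by simp
    have rest: "(\<Sum>u\<in>P-{t}. F u) \<le> (\<Sum>u\<in>P-{t}. c_delta \<delta> * (\<rho> u)^2)"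
    proof (rule sum_mono)
      fix u assume "u \<in> P - {t}"
      then have uP: "u \<in> P" by simp
      have "F u \<le> (1+\<delta>)*(\<rho> u)^2" using fiber_general[OF uP] unfolding F_def .
      also have "\<dots> \<le> c_delta \<delta> * (\<rho> u)^2" using c1 by (rule mult_right_mono) simp
      finally show "F u \<le> c_delta \<delta> * (\<rho> u)^2" .
    qed
    have s1: "(\<Sum>u\<in>P. F u) = F t + (\<Sum>u\<in>P-{t}. F u)" by (rule sum.remove[OF finP t(1)])
    have s2: "(\<Sum>u\<in>P. c_delta \<delta> * (\<rho> u)^2) = c_delta \<delta> * (\<rho> t)^2 + (\<Sum>u\<in>P-{t}. c_delta \<delta> * (\<rho> u)^2)"
      by (rule sum.remove[OF finP t(1)])
    have s3: "c_delta \<delta> * cost2 P \<rho> = (\<Sum>u\<in>P. c_delta \<delta> * (\<rho> u)^2)"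
      unfolding cost2_def by (simp add: sum_distrib_left)
    show ?thesis using cost star rest s1 s2 s3 by linarith
  qed
qed

end

theorem lemma12:
  fixes P :: "real set" and s \<delta> :: real
  assumes "finite P" and "s \<in> P" and "1 / 2 < \<delta>" and "\<delta> < 1"
  shows "cost2 P (rho_sb P s \<delta>) \<le> c_delta \<delta> * OPT P s"
proof -
  have c1: "1 + \<delta> + \<delta>*(1-\<delta>)^2 \<le> c_delta \<delta>" by (rule c_ge1[OF assms(3,4)])
  have "0 \<le> \<delta>*(1-\<delta>)^2" using assms(3) by simp
  then have cpos: "0 < c_delta \<delta>" using c1 assms(3) by linarith
  define R where "R = (\<Sum>x\<in>P. \<bar>x - s\<bar>)"
  have feas0: "feasible P s (\<lambda>_. R)"
    unfolding feasible_def
  proof (intro conjI ballI)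
    fix p assume "p \<in> P"
    show "0 \<le> R" unfolding R_def by (simp add: sum_nonneg)
  next
    fix q assume qP: "q \<in> P"
    have "\<bar>q - s\<bar> \<le> R" unfolding R_def by (rule member_le_sum[OF qP]) (simp_all add: assms(1))
    then have "(s, q) \<in> edges P (\<lambda>_. R)" unfolding edges_def using assms(2) qP by (simp add: abs_minus_commute)
    then show "(s, q) \<in> (edges P (\<lambda>_. R))\<^sup>*" by (rule r_into_rtrancl)
  qed
  let ?Set = "{cost2 P \<rho> | \<rho>. feasible P s \<rho>}"
  have ne: "?Set \<noteq> {}" using feas0 by blast
  have "cost2 P (rho_sb P s \<delta>) / c_delta \<delta> \<le> Inf ?Set"
  proof (rule cInf_greatest[OF ne])
    fix y assume "y \<in> ?Set"
    then obtain \<rho> where y: "y = cost2 P \<rho>" "feasible P s \<rho>" by blast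
    have st: "setting P s \<delta> \<rho>" unfolding setting_def using assms y(2) by blast
    have "cost2 P (rho_sb P s \<delta>) \<le> c_delta \<delta> * y" using setting.main_bound[OF st] y(1) by simp
    then show "cost2 P (rho_sb P s \<delta>) / c_delta \<delta> \<le> y" using cpos by (simp add: pos_divide_le_eq mult.commute)
  qed
  then show ?thesis unfolding OPT_def using cpos by (simp add: pos_divide_le_eq mult.commute)
qed

end
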